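(* Let $\alpha>0$ and let $\tilde\psi_\ell,\tilde\psi_g\in C^2\big((\alpha,\infty)\times(0,\infty)\big)$ be functions of $(v,\theta)$. Set $\tilde p_i=-\partial_v\tilde\psi_i$ and $\tilde\eta_i=-\partial_\theta\tilde\psi_i$ for $i\in\{\ell,g\}$. Let $\rho_\ell>0$ and $\theta_b>0$ be such that $v_\ell:=1/\rho_\ell=v_\ell^*(\theta_b)$ is the saturated liquid volume at temperature $\theta_b$, and let $v_g^*:=v_g^*(\theta_b)$ be the corresponding saturated gas volume; that is, $\alpha<v_\ell<v_g^*$ and \[ \tilde p_\ell(v_\ell,\theta_b)=\tilde p_g(v_g^*,\theta_b)=\frac{\tilde\psi_\ell(v_\ell,\theta_b)-\tilde\psi_g(v_g^*,\theta_b)}{v_g^*-v_\ell}. \] For $\theta>0$, $v>\alpha$ with $v\ne v_\ell$, and $Z\in\mathbf{R}$ define \begin{align*} f_1(\theta,v,Z)&=\tilde p_\ell(v_\ell,\theta)-Z(v-v_\ell)-\frac{1}{v-v_\ell}\big(\tilde\psi_\ell(v_\ell,\theta)-\tilde\psi_g(v,\theta)\big),\\ f_2(\theta,v,Z)&=\tilde p_g(v,\theta)+Z(v-v_\ell)-\frac{1}{v-v_\ell}\big(\tilde\psi_\ell(v_\ell,\theta)-\tilde\psi_g(v,\theta)\big). \end{align*} Assume \[ \partial_v\tilde\eta_\ell(v_\ell,\theta_b)>\frac{\tilde\eta_g(v_g^*,\theta_b)-\tilde\eta_\ell(v_\ell,\theta_b)}{v_g^*-v_\ell},\qquad \partial_v\tilde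 p_g(v_g^*,\theta_b)<0 . \] Then for all sufficiently small $Z$ there is a unique $(v,\theta)$ near $(v_g^*,\theta_b)$ such that $f_1(\theta,v,Z)=0$ and $f_2(\theta,v,Z)=0$. Moreover, the resulting map $Z\mapsto\theta$ is strictly increasing.
   Context: $\tilde\psi_\ell$ and $\tilde\psi_g$ are the mass specific Helmholtz energies of the liquid and gas phase written as functions of the mass specific volume $v=1/\rho$ and the temperature $\theta$; $\tilde p_i$ is the pressure and $\tilde\eta_i$ the mass specific entropy. The displayed condition defining $v_\ell^*(\theta_b)$, $v_g^*(\theta_b)$ expresses that these are the contact points of the bitangent line to the graphs of $\tilde\psi_\ell(\cdot,\theta_b)$ and $\tilde\psi_g(\cdot,\theta_b)$ (equal slopes $-\tilde p$ and the line through both points). The equations $f_1=f_2=0$ with $Z=j_\Gamma^2/2$ are the momentum balance $\tilde p_\ell-\tilde p_g=j_\Gamma^2(v-v_\ell)$ and the Gibbs–Thomson relation $\tilde\psi_g(v,\theta)-\tilde\psi_\ell(v_\ell,\theta)+(v-v_\ell)\frac{\tilde p_\ell+\tilde p_g}{2}=0$ at a flat liquid–gas interface with phase flux $j_\Gamma$, where $\theta$ is the interface temperature and $v=1/\rho_g$ the gas specific volume. *)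

theory Defs
  imports "HOL-Analysis.Analysis"
begin

text \<open>Functions of (v, theta), written curried: f v theta.\<close>

definition dv :: "(real \<Rightarrow> real \<Rightarrow> real) \<Rightarrow> real \<Rightarrow> real \<Rightarrow> real" where
  "dv f v \<theta> = deriv (\<lambda>x. f x \<theta>) v"

definition dth :: "(real \<Rightarrow> real \<Rightarrow> real) \<Rightarrow> real \<Rightarrow> real \<Rightarrow> real" where
  "dth f v \<theta> = deriv (\<lambda>y. f v y) \<theta>"

definition C1_on :: "(real \<Rightarrow> real \<Rightarrow> real) \<Rightarrow> (real \<times> real) set \<Rightarrow> bool" where
  "C1_on f S \<longleftrightarrow>
     (\<forall>v \<theta>. (v, \<theta>) \<in> S \<longrightarrow> (\<lambda>x. f x \<theta>) differentiable (at v) \<and> (\<lambda>y. f v y) differentiable (at \<theta>)) \<and>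
     continuous_on S (case_prod f) \<and>
     continuous_on S (case_prod (dv f)) \<and>
     continuous_on S (case_prod (dth f))"

definition C2_on :: "(real \<Rightarrow> real \<Rightarrow> real) \<Rightarrow> (real \<times> real) set \<Rightarrow> bool" where
  "C2_on f S \<longleftrightarrow> C1_on f S \<and> C1_on (dv f) S \<and> C1_on (dth f) S"

definition phase_dom :: "real \<Rightarrow> (real \<times> real) set" where
  "phase_dom \<alpha> = {\<alpha><..} \<times> {0<..}"

definition pres :: "(real \<Rightarrow> real \<Rightarrow> real) \<Rightarrow> real \<Rightarrow> real \<Rightarrow> real" where
  "pres \<psi> v \<theta> = - dv \<psi> v \<theta>"

definition entr :: "(real \<Rightarrow> real \<Rightarrow> real) \<Rightarrow> real \<Rightarrow> real \<Rightarrow> real" where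
  "entr \<psi> v \<theta> = - dth \<psi> v \<theta>"

definition f1 :: "(real \<Rightarrow> real \<Rightarrow> real) \<Rightarrow> (real \<Rightarrow> real \<Rightarrow> real) \<Rightarrow> real \<Rightarrow> real \<Rightarrow> real \<Rightarrow> real \<Rightarrow> real" where
  "f1 \<psi>l \<psi>g vl \<theta> v Z = pres \<psi>l vl \<theta> - Z * (v - vl) - (\<psi>l vl \<theta> - \<psi>g v \<theta>) / (v - vl)"

definition f2 :: "(real \<Rightarrow> real \<Rightarrow> real) \<Rightarrow> (real \<Rightarrow> real \<Rightarrow> real) \<Rightarrow> real \<Rightarrow> real \<Rightarrow> real \<Rightarrow> real \<Rightarrow> real" where
  "f2 \<psi>l \<psi>g vl \<theta> v Z = pres \<psi>g v \<theta> + Z * (v - vl) - (\<psi>l vl \<theta> - \<psi>g v \<theta>) / (v - vl)"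

end

theory Submission
  imports Defs
begin

lemma der_v: "(\<lambda>x. f x y) differentiable (at x) \<Longrightarrow> ((\<lambda>x. f x y) has_real_derivative dv f x y) (at x)"
  by (simp add: dv_def DERIV_deriv_iff_real_differentiable)

lemma der_t: "(\<lambda>y. f x y) differentiable (at y) \<Longrightarrow> ((\<lambda>y. f x y) has_real_derivative dth f x y) (at y)"
  by (simp add: dth_def DERIV_deriv_iff_real_differentiable)

lemma C1D:
  assumes "C1_on f S" "(v, \<theta>) \<in> S"
  shows "((\<lambda>x. f x \<theta>) has_real_derivative dv f v \<theta>) (at v)" "((\<lambda>y. f v y) has_real_derivative dth f v \<theta>) (at \<theta>)"
    "(\<lambda>x. f x \<theta>) differentiable (at v)" "(\<lambda>y. f v y) differentiable (at \<theta>)"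
  using assms unfolding C1_on_def by (auto intro: der_v der_t)

lemma C1C:
  assumes "C1_on f S"
  shows "continuous_on S (case_prod f)" "continuous_on S (case_prod (dv f))" "continuous_on S (case_prod (dth f))"
  using assms unfolding C1_on_def by auto

lemma ic_full:
  fixes g :: "real \<Rightarrow> real \<Rightarrow> real"
  assumes "continuous_on S (case_prod g)" "open S" "p \<in> S"
  shows "isCont (\<lambda>p. g (fst p) (snd p)) p"
proof -
  have "isCont (case_prod g) p" using assms continuous_on_eq_continuous_at by blast
  moreover have "(\<lambda>p. g (fst p) (snd p)) = case_prod g" by (simp add: fun_eq_iff split_def)
  ultimately show ?thesis by simp
qed

lemma ic_L:
  fixes g :: "real \<Rightarrow> real \<Rightarrow> real" and p :: "real \<times> real"
  assumes "continuous_on S (case_prod g)" "open S" "(c, snd p) \<in> S"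
  shows "isCont (\<lambda>p. g c (snd p)) p"
proof -
  have "isCont (case_prod g) (c, snd p)" using assms continuous_on_eq_continuous_at by blast
  moreover have "isCont (\<lambda>p. (c, snd p)) p" by (intro continuous_intros)
  ultimately have "isCont (\<lambda>x. case_prod g (c, snd x)) p" using isCont_o2 by fastforce
  thus ?thesis by simp
qed

lemma ev_cont:
  fixes h :: "real \<times> real \<Rightarrow> real"
  assumes "isCont h p" "e > 0"
  shows "eventually (\<lambda>x. \<bar>h x - h p\<bar> < e) (nhds p)"
proof -
  obtain d where "d > 0" "\<And>x. dist x p < d \<Longrightarrow> dist (h x) (h p) < e"
    using assms unfolding continuous_at_eps_delta by blast
  thus ?thesis unfolding eventually_nhds_metric by (auto simp: dist_real_def)
qed

lemma deriv_eqD: "(f has_real_derivative D) F \<Longrightarrow> D = E \<Longrightarrow> (f has_real_derivative E) F"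
  by simp

lemma mvt_gen:
  fixes f f' :: "real \<Rightarrow> real"
  assumes "\<And>z. min x y \<le> z \<Longrightarrow> z \<le> max x y \<Longrightarrow> (f has_real_derivative f' z) (at z)"
  shows "\<exists>z. min x y \<le> z \<and> z \<le> max x y \<and> f y - f x = (y - x) * f' z"
proof (cases x y rule: linorder_cases)
  case less
  then obtain z where "x < z" "z < y" "f y - f x = (y - x) * f' z"
    using MVT2[of x y f f'] assms by (auto simp: min_def max_def)
  then show ?thesis using less by (intro exI[of _ z]) auto
next
  case equal
  then show ?thesis by (intro exI[of _ x]) auto
next
  case greater
  then obtain z where "y < z" "z < x" "f x - f y = (x - y) * f' z"
    using MVT2[of y x f f'] assms by (auto simp: min_def max_def)
  then show ?thesis using greater by (intro exI[of _ z]) (auto simp: algebra_simps)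
qed

lemma schwarz:
  fixes f :: "real \<Rightarrow> real \<Rightarrow> real"
  assumes S: "open S" "(x0, y0) \<in> S"
    and D: "\<And>x y. (x, y) \<in> S \<Longrightarrow> (\<lambda>x. f x y) differentiable (at x) \<and> (\<lambda>y. f x y) differentiable (at y)
         \<and> (\<lambda>x. dth f x y) differentiable (at x) \<and> (\<lambda>y. dv f x y) differentiable (at y)"
    and C1: "isCont (case_prod (dv (dth f))) (x0, y0)"
    and C2: "isCont (case_prod (dth (dv f))) (x0, y0)"
  shows "dth (dv f) x0 y0 = dv (dth f) x0 y0"
proof (rule ccontr)
  let ?c1 = "dth (dv f) x0 y0" and ?c2 = "dv (dth f) x0 y0"
  assume ne: "?c1 \<noteq> ?c2"
  define e where "e = \<bar>?c1 - ?c2\<bar> / 3"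
  have e: "e > 0" using ne by (simp add: e_def)
  obtain d1 where d1: "d1 > 0" "ball (x0, y0) d1 \<subseteq> S" using S open_contains_ball by blast
  obtain d2 where d2: "d2 > 0" "\<And>p. dist p (x0, y0) < d2 \<Longrightarrow> dist (case_prod (dv (dth f)) p) ?c2 < e"
    using C1 e unfolding continuous_at_eps_delta by fastforce
  obtain d3 where d3: "d3 > 0" "\<And>p. dist p (x0, y0) < d3 \<Longrightarrow> dist (case_prod (dth (dv f)) p) ?c1 < e"
    using C2 e unfolding continuous_at_eps_delta by fastforce
  define d where "d = min d1 (min d2 d3)"
  define h where "h = d / 3"
  have h: "h > 0" using d1 d2 d3 by (simp add: h_def d_def)
  have inS: "dist (x, y) (x0, y0) < d" if "x0 \<le> x" "x \<le> x0 + h" "y0 \<le> y" "y \<le> y0 + h" for x y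
  proof -
    have "dist (x, y) (x0, y0) \<le> \<bar>x - x0\<bar> + \<bar>y - y0\<bar>"
      unfolding dist_Pair_Pair dist_real_def using sqrt_sum_squares_le_sum_abs[of "x - x0" "y - y0"] by simp
    also have "\<dots> \<le> 2 * h" using that by auto
    also have "\<dots> < d" using h by (simp add: h_def)
    finally show ?thesis .
  qed
  have inS': "(x, y) \<in> S" if "x0 \<le> x" "x \<le> x0 + h" "y0 \<le> y" "y \<le> y0 + h" for x y
    using inS[OF that] d1 by (auto simp: d_def dist_commute subset_iff)
  define \<Delta> where "\<Delta> = f (x0 + h) (y0 + h) - f (x0 + h) y0 - f x0 (y0 + h) + f x0 y0"
  have dA: "\<And>x. x0 \<le> x \<Longrightarrow> x \<le> x0 + h \<Longrightarrow> ((\<lambda>s. f s (y0 + h) - f s y0) has_real_derivative dv f x (y0 + h) - dv f x y0) (at x)"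
    using h by (auto intro!: derivative_eq_intros der_v D[THEN conjunct1] inS')
  obtain \<xi> where \<xi>: "x0 < \<xi>" "\<xi> < x0 + h"
    "(f (x0 + h) (y0 + h) - f (x0 + h) y0) - (f x0 (y0 + h) - f x0 y0) = h * (dv f \<xi> (y0 + h) - dv f \<xi> y0)"
    using MVT2[of x0 "x0 + h", OF _ dA] h by auto
  have dB: "\<And>t. y0 \<le> t \<Longrightarrow> t \<le> y0 + h \<Longrightarrow> ((\<lambda>t. dv f \<xi> t) has_real_derivative dth (dv f) \<xi> t) (at t)"
    using h \<xi> by (auto intro!: der_t D[THEN conjunct2, THEN conjunct2, THEN conjunct2] inS')
  obtain \<zeta> where \<zeta>: "y0 < \<zeta>" "\<zeta> < y0 + h"
    "dv f \<xi> (y0 + h) - dv f \<xi> y0 = h * dth (dv f) \<xi> \<zeta>"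
    using MVT2[of y0 "y0 + h", OF _ dB] h by auto
  have dC: "\<And>t. y0 \<le> t \<Longrightarrow> t \<le> y0 + h \<Longrightarrow> ((\<lambda>t. f (x0 + h) t - f x0 t) has_real_derivative dth f (x0 + h) t - dth f x0 t) (at t)"
    using h by (auto intro!: derivative_eq_intros der_t D[THEN conjunct2, THEN conjunct1] inS')
  obtain \<eta> where \<eta>: "y0 < \<eta>" "\<eta> < y0 + h"
    "(f (x0 + h) (y0 + h) - f x0 (y0 + h)) - (f (x0 + h) y0 - f x0 y0) = h * (dth f (x0 + h) \<eta> - dth f x0 \<eta>)"
    using MVT2[of y0 "y0 + h", OF _ dC] h by auto
  have dD: "\<And>x. x0 \<le> x \<Longrightarrow> x \<le> x0 + h \<Longrightarrow> ((\<lambda>s. dth f s \<eta>) has_real_derivative dv (dth f) x \<eta>) (at x)"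
    using h \<eta> by (auto intro!: der_v D[THEN conjunct2, THEN conjunct2, THEN conjunct1] inS')
  obtain \<mu> where \<mu>: "x0 < \<mu>" "\<mu> < x0 + h"
    "dth f (x0 + h) \<eta> - dth f x0 \<eta> = h * dv (dth f) \<mu> \<eta>"
    using MVT2[of x0 "x0 + h", OF _ dD] h by auto
  have "h * (h * dth (dv f) \<xi> \<zeta>) = h * (h * dv (dth f) \<mu> \<eta>)"
    using \<xi>(3) \<zeta>(3) \<eta>(3) \<mu>(3) by (simp add: algebra_simps)
  hence eq: "dth (dv f) \<xi> \<zeta> = dv (dth f) \<mu> \<eta>" using h by simp
  have "dist (\<xi>, \<zeta>) (x0, y0) < d3" using inS[of \<xi> \<zeta>] \<xi> \<zeta> by (auto simp: d_def)
  hence 1: "\<bar>dth (dv f) \<xi> \<zeta> - ?c1\<bar> < e" using d3(2) by (auto simp: dist_real_def)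
  have "dist (\<mu>, \<eta>) (x0, y0) < d2" using inS[of \<mu> \<eta>] \<mu> \<eta> by (auto simp: d_def)
  hence 2: "\<bar>dv (dth f) \<mu> \<eta> - ?c2\<bar> < e" using d2(2) by (auto simp: dist_real_def)
  show False using 1 2 eq e_def e by (simp add: abs_if split: if_splits)
qed


lemma core_uniq:
  fixes P1 P2 P1t P1v P2t P2v :: "real \<Rightarrow> real \<Rightarrow> real"
  assumes D: "\<And>\<theta> v. \<bar>\<theta> - t0\<bar> \<le> \<rho> \<Longrightarrow> \<bar>v - v0\<bar> \<le> \<rho> \<Longrightarrow>
      ((\<lambda>\<theta>. P1 \<theta> v) has_real_derivative P1t \<theta> v) (at \<theta>) \<and> ((\<lambda>v. P1 \<theta> v) has_real_derivative P1v \<theta> v) (at v) \<and>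
      ((\<lambda>\<theta>. P2 \<theta> v) has_real_derivative P2t \<theta> v) (at \<theta>) \<and> ((\<lambda>v. P2 \<theta> v) has_real_derivative P2v \<theta> v) (at v)"
    and B: "\<And>\<theta> v Z. \<bar>\<theta> - t0\<bar> \<le> \<rho> \<Longrightarrow> \<bar>v - v0\<bar> \<le> \<rho> \<Longrightarrow> \<bar>Z\<bar> < \<delta>0 \<Longrightarrow>
      a \<le> P1t \<theta> v \<and> \<bar>P1v \<theta> v - Z\<bar> \<le> \<epsilon> \<and> P2v \<theta> v + Z \<le> -b \<and> \<bar>P2v \<theta> v + Z\<bar> \<le> N \<and> \<bar>P2t \<theta> v\<bar> \<le> M"
    and ab: "a > 0" "b > 0" "\<epsilon> \<le> b / 2" "\<epsilon> * M \<le> a * b / 4" "L < v0 - \<rho>"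
    and pts: "\<bar>\<theta>1 - t0\<bar> \<le> \<rho>" "\<bar>v1 - v0\<bar> \<le> \<rho>" "\<bar>\<theta>2 - t0\<bar> \<le> \<rho>" "\<bar>v2 - v0\<bar> \<le> \<rho>"
      "\<bar>Z1\<bar> < \<delta>0" "\<bar>Z2\<bar> < \<delta>0" "Z1 \<le> Z2"
    and eqs: "P1 \<theta>1 v1 - Z1 * (v1 - L) = 0" "P2 \<theta>1 v1 + Z1 * (v1 - L) = 0"
      "P1 \<theta>2 v2 - Z2 * (v2 - L) = 0" "P2 \<theta>2 v2 + Z2 * (v2 - L) = 0"
  shows "(Z1 < Z2 \<longrightarrow> \<theta>1 < \<theta>2) \<and> (Z1 = Z2 \<longrightarrow> \<theta>1 = \<theta>2 \<and> v1 = v2)"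
proof -
  have cv: "\<bar>z - c\<bar> \<le> \<rho>" if "min x y \<le> z" "z \<le> max x y" "\<bar>x - c\<bar> \<le> \<rho>" "\<bar>y - c\<bar> \<le> \<rho>" for x y z c :: real
    using that by (auto simp: min_def max_def abs_le_iff split: if_splits)
  obtain \<xi> where \<xi>: "min v1 v2 \<le> \<xi>" "\<xi> \<le> max v1 v2" "P1 \<theta>1 v2 - P1 \<theta>1 v1 = (v2 - v1) * P1v \<theta>1 \<xi>"
    using mvt_gen[of v1 v2 "\<lambda>v. P1 \<theta>1 v" "\<lambda>v. P1v \<theta>1 v"] D cv pts by blast
  obtain \<zeta> where \<zeta>: "min \<theta>1 \<theta>2 \<le> \<zeta>" "\<zeta> \<le> max \<theta>1 \<theta>2" "P1 \<theta>2 v2 - P1 \<theta>1 v2 = (\<theta>2 - \<theta>1) * P1t \<zeta> v2"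
    using mvt_gen[of \<theta>1 \<theta>2 "\<lambda>\<theta>. P1 \<theta> v2" "\<lambda>\<theta>. P1t \<theta> v2"] D cv pts by blast
  obtain \<xi>' where \<xi>': "min v1 v2 \<le> \<xi>'" "\<xi>' \<le> max v1 v2" "P2 \<theta>1 v2 - P2 \<theta>1 v1 = (v2 - v1) * P2v \<theta>1 \<xi>'"
    using mvt_gen[of v1 v2 "\<lambda>v. P2 \<theta>1 v" "\<lambda>v. P2v \<theta>1 v"] D cv pts by blast
  obtain \<zeta>' where \<zeta>': "min \<theta>1 \<theta>2 \<le> \<zeta>'" "\<zeta>' \<le> max \<theta>1 \<theta>2" "P2 \<theta>2 v2 - P2 \<theta>1 v2 = (\<theta>2 - \<theta>1) * P2t \<zeta>' v2"
    using mvt_gen[of \<theta>1 \<theta>2 "\<lambda>\<theta>. P2 \<theta> v2" "\<lambda>\<theta>. P2t \<theta> v2"] D cv pts by blast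
  define A1 where "A1 = P1t \<zeta> v2"
  define e1 where "e1 = P1v \<theta>1 \<xi> - Z2"
  define e2 where "e2 = P2v \<theta>1 \<xi>' + Z2"
  define C2 where "C2 = P2t \<zeta>' v2"
  have A1: "a \<le> A1" using B[of \<zeta> v2 Z2] cv[OF \<zeta>(1,2)] pts by (auto simp: A1_def)
  have e1: "\<bar>e1\<bar> \<le> \<epsilon>" using B[of \<theta>1 \<xi> Z2] cv[OF \<xi>(1,2)] pts by (auto simp: e1_def)
  have e2: "e2 \<le> -b" using B[of \<theta>1 \<xi>' Z2] cv[OF \<xi>'(1,2)] pts by (auto simp: e2_def)
  have C2: "\<bar>C2\<bar> \<le> M" using B[of \<zeta>' v2 Z2] cv[OF \<zeta>'(1,2)] pts by (auto simp: C2_def)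
  define dt where "dt = \<theta>2 - \<theta>1"
  define dv where "dv = v2 - v1"
  define dZ where "dZ = Z2 - Z1"
  define D1 where "D1 = v1 - L"
  have D1: "D1 > 0" using pts ab by (auto simp: D1_def abs_le_iff)
  have dZ: "dZ \<ge> 0" using pts by (simp add: dZ_def)
  have E1: "dt * A1 + dv * e1 = dZ * D1"
    using eqs \<xi>(3) \<zeta>(3) unfolding dt_def dv_def dZ_def D1_def A1_def e1_def by (simp add: algebra_simps)
  have E2: "dt * C2 + dv * e2 = - (dZ * D1)"
    using eqs \<xi>'(3) \<zeta>'(3) unfolding dt_def dv_def dZ_def D1_def C2_def e2_def by (simp add: algebra_simps)
  have eps0: "\<epsilon> \<ge> 0" using e1 by linarith
  have K1: "b * \<bar>dv\<bar> \<le> dZ * D1 + M * \<bar>dt\<bar>"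
  proof -
    have "b * \<bar>dv\<bar> \<le> \<bar>e2\<bar> * \<bar>dv\<bar>" using e2 ab by (intro mult_right_mono) auto
    also have "\<dots> = \<bar>dZ * D1 + dt * C2\<bar>" using E2 by (simp add: abs_mult[symmetric] algebra_simps)
    also have "\<dots> \<le> dZ * D1 + \<bar>dt\<bar> * \<bar>C2\<bar>" using dZ D1 by (simp add: abs_mult[symmetric] abs_triangle_ineq order_trans[OF abs_triangle_ineq])
    also have "\<dots> \<le> dZ * D1 + M * \<bar>dt\<bar>" using C2 by (simp add: mult.commute mult_right_mono)
    finally show ?thesis .
  qed
  have K2: "\<bar>dv * e1\<bar> \<le> \<epsilon> * \<bar>dv\<bar>" using e1 by (simp add: abs_mult mult.commute[of "\<bar>dv\<bar>"] mult_right_mono)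
  have K3: "\<epsilon> * (b * \<bar>dv\<bar>) \<le> \<epsilon> * (dZ * D1 + M * \<bar>dt\<bar>)" using K1 eps0 by (rule mult_left_mono)
  have K4: "\<epsilon> * M * \<bar>dt\<bar> \<le> a * b / 4 * \<bar>dt\<bar>" using ab by (intro mult_right_mono) auto
  have K5: "\<epsilon> * (dZ * D1) \<le> b / 2 * (dZ * D1)" using ab dZ D1 by (intro mult_right_mono) auto
  show ?thesis
  proof (rule conjI[OF impI impI])
    assume lt: "Z1 < Z2"
    show "\<theta>1 < \<theta>2"
    proof (rule ccontr)
      assume "\<not> \<theta>1 < \<theta>2"
      hence dt0: "dt \<le> 0" by (simp add: dt_def)
      have "dt * A1 \<le> dt * a" using dt0 A1 by (simp add: mult_left_mono_neg)
      moreover have "dv * e1 \<le> \<epsilon> * \<bar>dv\<bar>" using K2 abs_ge_self[of "dv * e1"] by linarith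
      ultimately have "dZ * D1 \<le> dt * a + \<epsilon> * \<bar>dv\<bar>" using E1 by linarith
      hence "dZ * D1 \<le> a * dt + \<epsilon> * \<bar>dv\<bar>" by (simp add: mult.commute)
      hence "b * (dZ * D1) \<le> b * (a * dt + \<epsilon> * \<bar>dv\<bar>)" using ab by (simp add: mult_left_mono)
      hence "b * (dZ * D1) \<le> a * b * dt + \<epsilon> * (b * \<bar>dv\<bar>)" by (simp add: algebra_simps)
      hence "b * (dZ * D1) \<le> a * b * dt + b / 2 * (dZ * D1) + a * b / 4 * \<bar>dt\<bar>"
        using K3 K4 K5 by (simp add: algebra_simps)
      moreover have "\<bar>dt\<bar> = - dt" using dt0 by simp
      ultimately have "b / 2 * (dZ * D1) \<le> 3 / 4 * (a * b) * dt" by (simp add: algebra_simps)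
      moreover have "3 / 4 * (a * b) * dt \<le> 0" using ab dt0 by (simp add: mult_nonneg_nonpos)
      moreover have "b / 2 * (dZ * D1) > 0" using ab D1 lt by (simp add: dZ_def)
      ultimately show False by linarith
    qed
  next
    assume eq: "Z1 = Z2"
    hence dZ0: "dZ = 0" by (simp add: dZ_def)
    have A1p: "A1 > 0" using A1 ab by linarith
    have "dt * A1 = - (dv * e1)" using E1 dZ0 by simp
    hence "\<bar>dt * A1\<bar> = \<bar>dv * e1\<bar>" by simp
    moreover have "\<bar>dt * A1\<bar> = \<bar>dt\<bar> * A1" using A1p by (simp add: abs_mult)
    ultimately have "\<bar>dt\<bar> * A1 \<le> \<epsilon> * \<bar>dv\<bar>" using K2 by linarith
    hence "b * (\<bar>dt\<bar> * A1) \<le> b * (\<epsilon> * \<bar>dv\<bar>)" using ab by (simp add: mult_left_mono)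
    hence "b * (\<bar>dt\<bar> * A1) \<le> \<epsilon> * (b * \<bar>dv\<bar>)" by (simp add: algebra_simps)
    hence "b * (\<bar>dt\<bar> * A1) \<le> \<epsilon> * M * \<bar>dt\<bar>" using K3 dZ0 by (simp add: algebra_simps)
    hence "b * (\<bar>dt\<bar> * A1) \<le> a * b / 4 * \<bar>dt\<bar>" using K4 by linarith
    moreover have "b * (\<bar>dt\<bar> * a) \<le> b * (\<bar>dt\<bar> * A1)" using A1 ab by (simp add: mult_left_mono)
    ultimately have "a * b * \<bar>dt\<bar> \<le> a * b / 4 * \<bar>dt\<bar>" by (simp add: algebra_simps)
    hence "(3 / 4 * (a * b)) * \<bar>dt\<bar> \<le> 0" by (simp add: algebra_simps)
    moreover have "3 / 4 * (a * b) > 0" using ab by simp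
    ultimately have "\<bar>dt\<bar> \<le> 0" by (meson mult_pos_pos not_le)
    hence dt0: "dt = 0" by simp
    have "b * \<bar>dv\<bar> \<le> 0" using K1 dZ0 dt0 by simp
    hence "\<bar>dv\<bar> \<le> 0" using ab by (meson mult_pos_pos not_le)
    hence "dv = 0" by simp
    with dt0 show "\<theta>1 = \<theta>2 \<and> v1 = v2" by (simp add: dt_def dv_def)
  qed
qed


lemma mvt_in:
  fixes f f' :: "real \<Rightarrow> real"
  assumes "\<bar>x - c\<bar> \<le> r" "\<bar>y - c\<bar> \<le> r" "\<And>z. \<bar>z - c\<bar> \<le> r \<Longrightarrow> (f has_real_derivative f' z) (at z)"
  shows "\<exists>z. \<bar>z - c\<bar> \<le> r \<and> f y - f x = (y - x) * f' z"
proof -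
  have cv: "\<bar>z - c\<bar> \<le> r" if "min x y \<le> z" "z \<le> max x y" for z
    using that assms(1,2) by (auto simp: min_def max_def abs_le_iff split: if_splits)
  obtain z where "min x y \<le> z" "z \<le> max x y" "f y - f x = (y - x) * f' z"
    using mvt_gen[of x y f f'] assms(3) cv by blast
  then show ?thesis using cv by blast
qed

lemma core_exist:
  fixes P1 P2 P1t P1v P2t P2v :: "real \<Rightarrow> real \<Rightarrow> real"
  assumes D: "\<And>\<theta> v. \<bar>\<theta> - t0\<bar> \<le> \<rho> \<Longrightarrow> \<bar>v - v0\<bar> \<le> \<rho> \<Longrightarrow>
      ((\<lambda>\<theta>. P1 \<theta> v) has_real_derivative P1t \<theta> v) (at \<theta>) \<and> ((\<lambda>v. P1 \<theta> v) has_real_derivative P1v \<theta> v) (at v) \<and>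
      ((\<lambda>\<theta>. P2 \<theta> v) has_real_derivative P2t \<theta> v) (at \<theta>) \<and> ((\<lambda>v. P2 \<theta> v) has_real_derivative P2v \<theta> v) (at v)"
    and B: "\<And>\<theta> v Z. \<bar>\<theta> - t0\<bar> \<le> \<rho> \<Longrightarrow> \<bar>v - v0\<bar> \<le> \<rho> \<Longrightarrow> \<bar>Z\<bar> < \<delta>0 \<Longrightarrow>
      a \<le> P1t \<theta> v \<and> \<bar>P1v \<theta> v - Z\<bar> \<le> \<epsilon> \<and> P2v \<theta> v + Z \<le> -b \<and> \<bar>P2v \<theta> v + Z\<bar> \<le> N \<and> \<bar>P2t \<theta> v\<bar> \<le> M"
    and ab: "a > 0" "b > 0" "\<epsilon> \<le> b / 2" "\<epsilon> * M \<le> a * b / 4" "\<epsilon> \<le> a / 2" "L < v0 - \<rho>" "\<delta>0 > 0"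
    and base: "P1 t0 v0 = 0" "P2 t0 v0 = 0"
    and s: "0 < s" "s \<le> \<rho>"
  shows "\<exists>\<delta>>0. \<forall>Z. \<bar>Z\<bar> < \<delta> \<longrightarrow> (\<exists>\<theta> v. \<bar>\<theta> - t0\<bar> \<le> s \<and> \<bar>v - v0\<bar> \<le> s \<and>
            P1 \<theta> v - Z * (v - L) = 0 \<and> P2 \<theta> v + Z * (v - L) = 0)"
proof -
  define D0 where "D0 = v0 - L"
  have D0: "D0 > 0" using ab s by (simp add: D0_def)
  have M0: "M \<ge> 0" using B[of t0 v0 0] ab s by auto
  have eps0: "\<epsilon> \<ge> 0" using B[of t0 v0 0] ab s by auto
  define X where "X = s * a * min a b"
  have X: "X > 0" using s ab by (simp add: X_def)
  define \<delta> where "\<delta> = min \<delta>0 (X / (4 * D0 * (a + M)))"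
  have \<delta>: "\<delta> > 0" using ab D0 M0 X by (simp add: \<delta>_def)
  show ?thesis
  proof (rule exI[of _ \<delta>], intro conjI allI impI \<delta>)
    fix Z :: real
    assume Z: "\<bar>Z\<bar> < \<delta>"
    have Z0: "\<bar>Z\<bar> < \<delta>0" using Z by (simp add: \<delta>_def)
    have "\<bar>Z\<bar> < X / (4 * D0 * (a + M))" using Z by (simp add: \<delta>_def)
    moreover have "4 * D0 * (a + M) > 0" using ab D0 M0 by simp
    ultimately have "\<bar>Z\<bar> * (4 * D0 * (a + M)) < X" by (simp add: pos_less_divide_eq)
    hence ZX: "\<bar>Z\<bar> * D0 * (a + M) * 4 < X" by (simp add: algebra_simps)
    have "X \<le> s * a * (a + M)" unfolding X_def using s ab M0
      by (intro mult_left_mono) auto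
    hence "(\<bar>Z\<bar> * D0 * 4) * (a + M) < (s * a) * (a + M)" using ZX by (simp add: algebra_simps)
    hence ZD1: "\<bar>Z\<bar> * D0 * 4 < s * a" using ab M0 by (simp add: mult_less_cancel_right)
    have "X \<le> s * a * b" unfolding X_def using s ab by (intro mult_left_mono) auto
    hence ZD2: "\<bar>Z\<bar> * D0 * (a + M) * 4 < s * a * b" using ZX by linarith
    define F1 where "F1 \<theta> v = P1 \<theta> v - Z * (v - L)" for \<theta> v
    define F2 where "F2 \<theta> v = P2 \<theta> v + Z * (v - L)" for \<theta> v
    have dF1t: "((\<lambda>\<theta>. F1 \<theta> v) has_real_derivative P1t \<theta> v) (at \<theta>)" if "\<bar>\<theta> - t0\<bar> \<le> \<rho>" "\<bar>v - v0\<bar> \<le> \<rho>" for \<theta> v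
      unfolding F1_def using D[OF that] by (auto intro!: derivative_eq_intros)
    have dF1v: "((\<lambda>v. F1 \<theta> v) has_real_derivative P1v \<theta> v - Z) (at v)" if "\<bar>\<theta> - t0\<bar> \<le> \<rho>" "\<bar>v - v0\<bar> \<le> \<rho>" for \<theta> v
      unfolding F1_def using D[OF that] by (auto intro!: derivative_eq_intros)
    have dF2t: "((\<lambda>\<theta>. F2 \<theta> v) has_real_derivative P2t \<theta> v) (at \<theta>)" if "\<bar>\<theta> - t0\<bar> \<le> \<rho>" "\<bar>v - v0\<bar> \<le> \<rho>" for \<theta> v
      unfolding F2_def using D[OF that] by (auto intro!: derivative_eq_intros)
    have dF2v: "((\<lambda>v. F2 \<theta> v) has_real_derivative P2v \<theta> v + Z) (at v)" if "\<bar>\<theta> - t0\<bar> \<le> \<rho>" "\<bar>v - v0\<bar> \<le> \<rho>" for \<theta> v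
      unfolding F2_def using D[OF that] by (auto intro!: derivative_eq_intros)
    have Bz: "a \<le> P1t \<theta> v \<and> \<bar>P1v \<theta> v - Z\<bar> \<le> \<epsilon> \<and> P2v \<theta> v + Z \<le> -b \<and> \<bar>P2v \<theta> v + Z\<bar> \<le> N \<and> \<bar>P2t \<theta> v\<bar> \<le> M"
      if "\<bar>\<theta> - t0\<bar> \<le> \<rho>" "\<bar>v - v0\<bar> \<le> \<rho>" for \<theta> v
      using B[OF that Z0] .
    have sr: "\<bar>x\<bar> \<le> \<rho>" if "\<bar>x\<bar> \<le> s" for x using that s by linarith
    have F10: "F1 t0 v0 = - (Z * D0)" by (simp add: F1_def base D0_def)
    have ex1: "\<exists>\<theta>. \<bar>\<theta> - t0\<bar> \<le> s \<and> F1 \<theta> v = 0" if v: "\<bar>v - v0\<bar> \<le> s" for v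
    proof -
      have vr: "\<bar>v - v0\<bar> \<le> \<rho>" using sr[OF v] .
      obtain \<xi> where \<xi>: "\<bar>\<xi> - v0\<bar> \<le> \<rho>" "F1 t0 v - F1 t0 v0 = (v - v0) * (P1v t0 \<xi> - Z)"
        using mvt_in[of v0 v0 \<rho> v "\<lambda>v. F1 t0 v" "\<lambda>v. P1v t0 v - Z"] vr s dF1v[of t0] by auto
      have "\<bar>(v - v0) * (P1v t0 \<xi> - Z)\<bar> \<le> s * \<epsilon>"
        unfolding abs_mult using v Bz[of t0 \<xi>] \<xi>(1) s eps0 by (intro mult_mono) auto
      hence m1: "\<bar>F1 t0 v - F1 t0 v0\<bar> \<le> s * \<epsilon>" using \<xi>(2) by simp
      obtain \<zeta> where \<zeta>: "\<bar>\<zeta> - t0\<bar> \<le> \<rho>" "F1 (t0 + s) v - F1 t0 v = (t0 + s - t0) * P1t \<zeta> v"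
        using mvt_in[of t0 t0 \<rho> "t0 + s" "\<lambda>\<theta>. F1 \<theta> v" "\<lambda>\<theta>. P1t \<theta> v"] vr s dF1t by auto
      have "s * a \<le> s * P1t \<zeta> v" using Bz[OF \<zeta>(1) vr] s by (intro mult_left_mono) auto
      hence up: "F1 (t0 + s) v - F1 t0 v \<ge> s * a" using \<zeta>(2) by simp
      obtain \<zeta>' where \<zeta>': "\<bar>\<zeta>' - t0\<bar> \<le> \<rho>" "F1 (t0 - s) v - F1 t0 v = (t0 - s - t0) * P1t \<zeta>' v"
        using mvt_in[of t0 t0 \<rho> "t0 - s" "\<lambda>\<theta>. F1 \<theta> v" "\<lambda>\<theta>. P1t \<theta> v"] vr s dF1t by auto
      have "s * a \<le> s * P1t \<zeta>' v" using Bz[OF \<zeta>'(1) vr] s by (intro mult_left_mono) auto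
      hence dn: "F1 (t0 - s) v - F1 t0 v \<le> - (s * a)" using \<zeta>'(2) by simp
      have se: "s * \<epsilon> \<le> s * (a / 2)" using s ab by (intro mult_left_mono) auto
      have zd: "\<bar>Z * D0\<bar> = \<bar>Z\<bar> * D0" using D0 by (simp add: abs_mult)
      have p1: "F1 (t0 + s) v \<ge> 0" using up m1 F10 se zd ZD1 abs_ge_self[of "Z * D0"] by (simp add: abs_le_iff)
      have p2: "F1 (t0 - s) v \<le> 0" using dn m1 F10 se zd ZD1 abs_ge_minus_self[of "Z * D0"] by (simp add: abs_le_iff)
      have cont: "continuous_on {t0 - s..t0 + s} (\<lambda>\<theta>. F1 \<theta> v)"
        by (rule continuous_at_imp_continuous_on)
           (use s in \<open>auto intro!: DERIV_isCont[OF dF1t] vr simp: abs_le_iff sr\<close>)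
      obtain \<theta> where "t0 - s \<le> \<theta>" "\<theta> \<le> t0 + s" "F1 \<theta> v = 0"
        using IVT'[of "\<lambda>\<theta>. F1 \<theta> v" "t0 - s" 0 "t0 + s", OF p2 p1 _ cont] s by auto
      then show ?thesis by (intro exI[of _ \<theta>]) auto
    qed
    define \<tau> where "\<tau> v = (SOME \<theta>. \<bar>\<theta> - t0\<bar> \<le> s \<and> F1 \<theta> v = 0)" for v
    have \<tau>: "\<bar>\<tau> v - t0\<bar> \<le> s \<and> F1 (\<tau> v) v = 0" if "\<bar>v - v0\<bar> \<le> s" for v
      unfolding \<tau>_def using someI_ex[OF ex1[OF that]] .
    have lt: "a * \<bar>\<tau> v2 - \<tau> v1\<bar> \<le> \<epsilon> * \<bar>v2 - v1\<bar>" if v12: "\<bar>v1 - v0\<bar> \<le> s" "\<bar>v2 - v0\<bar> \<le> s" for v1 v2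
    proof -
      note t1 = \<tau>[OF v12(1)] and t2 = \<tau>[OF v12(2)]
      obtain \<zeta> where \<zeta>: "\<bar>\<zeta> - t0\<bar> \<le> \<rho>" "F1 (\<tau> v2) v2 - F1 (\<tau> v1) v2 = (\<tau> v2 - \<tau> v1) * P1t \<zeta> v2"
        using mvt_in[of "\<tau> v1" t0 \<rho> "\<tau> v2" "\<lambda>\<theta>. F1 \<theta> v2" "\<lambda>\<theta>. P1t \<theta> v2"] t1 t2 sr v12 dF1t by auto
      obtain \<xi> where \<xi>: "\<bar>\<xi> - v0\<bar> \<le> \<rho>" "F1 (\<tau> v1) v2 - F1 (\<tau> v1) v1 = (v2 - v1) * (P1v (\<tau> v1) \<xi> - Z)"
        using mvt_in[of v1 v0 \<rho> v2 "\<lambda>v. F1 (\<tau> v1) v" "\<lambda>v. P1v (\<tau> v1) v - Z"] t1 t2 sr v12 dF1v by auto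
      have "(\<tau> v2 - \<tau> v1) * P1t \<zeta> v2 = - ((v2 - v1) * (P1v (\<tau> v1) \<xi> - Z))"
        using \<zeta>(2) \<xi>(2) t1 t2 by simp
      hence "\<bar>\<tau> v2 - \<tau> v1\<bar> * \<bar>P1t \<zeta> v2\<bar> = \<bar>v2 - v1\<bar> * \<bar>P1v (\<tau> v1) \<xi> - Z\<bar>"
        by (metis abs_minus_cancel abs_mult)
      moreover have "\<bar>v2 - v1\<bar> * \<bar>P1v (\<tau> v1) \<xi> - Z\<bar> \<le> \<bar>v2 - v1\<bar> * \<epsilon>"
        using Bz[of "\<tau> v1" \<xi>] \<xi>(1) t1 sr by (intro mult_left_mono) auto
      moreover have "\<bar>\<tau> v2 - \<tau> v1\<bar> * a \<le> \<bar>\<tau> v2 - \<tau> v1\<bar> * \<bar>P1t \<zeta> v2\<bar>"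
        using Bz[of \<zeta> v2] \<zeta>(1) v12 sr by (intro mult_left_mono) auto
      ultimately show ?thesis by (simp add: mult.commute)
    qed
    define k where "k v = F2 (\<tau> v) v" for v
    have kst: "\<exists>C E. \<bar>C\<bar> \<le> M \<and> \<bar>E\<bar> \<le> N \<and> E \<le> -b \<and> k v2 - k v1 = (\<tau> v2 - \<tau> v1) * C + (v2 - v1) * E"
      if v12: "\<bar>v1 - v0\<bar> \<le> s" "\<bar>v2 - v0\<bar> \<le> s" for v1 v2
    proof -
      note t1 = \<tau>[OF v12(1)] and t2 = \<tau>[OF v12(2)]
      obtain \<zeta> where \<zeta>: "\<bar>\<zeta> - t0\<bar> \<le> \<rho>" "F2 (\<tau> v2) v2 - F2 (\<tau> v1) v2 = (\<tau> v2 - \<tau> v1) * P2t \<zeta> v2"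
        using mvt_in[of "\<tau> v1" t0 \<rho> "\<tau> v2" "\<lambda>\<theta>. F2 \<theta> v2" "\<lambda>\<theta>. P2t \<theta> v2"] t1 t2 sr v12 dF2t by auto
      obtain \<xi> where \<xi>: "\<bar>\<xi> - v0\<bar> \<le> \<rho>" "F2 (\<tau> v1) v2 - F2 (\<tau> v1) v1 = (v2 - v1) * (P2v (\<tau> v1) \<xi> + Z)"
        using mvt_in[of v1 v0 \<rho> v2 "\<lambda>v. F2 (\<tau> v1) v" "\<lambda>v. P2v (\<tau> v1) v + Z"] t1 t2 sr v12 dF2v by auto
      show ?thesis
        using Bz[of \<zeta> v2] Bz[of "\<tau> v1" \<xi>] \<zeta> \<xi> t1 v12 sr
        by (intro exI[of _ "P2t \<zeta> v2"] exI[of _ "P2v (\<tau> v1) \<xi> + Z"]) (auto simp: k_def)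
    qed
    have am: "\<And>x y. x \<le> y \<Longrightarrow> a * x \<le> a * y" using ab by (simp add: mult_left_mono)
    have N0: "N \<ge> 0" using Bz[of t0 v0] s by auto
    have klip: "a * \<bar>k v2 - k v1\<bar> \<le> (M * \<epsilon> + a * N) * \<bar>v2 - v1\<bar>"
      if v12: "\<bar>v1 - v0\<bar> \<le> s" "\<bar>v2 - v0\<bar> \<le> s" for v1 v2
    proof -
      obtain C E where CE: "\<bar>C\<bar> \<le> M" "\<bar>E\<bar> \<le> N" "k v2 - k v1 = (\<tau> v2 - \<tau> v1) * C + (v2 - v1) * E"
        using kst[OF v12] by blast
      have "\<bar>k v2 - k v1\<bar> \<le> \<bar>\<tau> v2 - \<tau> v1\<bar> * \<bar>C\<bar> + \<bar>v2 - v1\<bar> * \<bar>E\<bar>"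
        unfolding CE(3) abs_mult[symmetric] by (rule abs_triangle_ineq)
      from am[OF this] have "a * \<bar>k v2 - k v1\<bar> \<le> (a * \<bar>\<tau> v2 - \<tau> v1\<bar>) * \<bar>C\<bar> + a * (\<bar>v2 - v1\<bar> * \<bar>E\<bar>)"
        by (simp add: algebra_simps)
      moreover have "(a * \<bar>\<tau> v2 - \<tau> v1\<bar>) * \<bar>C\<bar> \<le> (\<epsilon> * \<bar>v2 - v1\<bar>) * M"
        by (rule mult_mono[OF lt[OF v12] CE(1)]) (use eps0 in auto)
      moreover have "a * (\<bar>v2 - v1\<bar> * \<bar>E\<bar>) \<le> a * (\<bar>v2 - v1\<bar> * N)"
        using CE(2) ab by (intro mult_left_mono) auto
      ultimately show ?thesis by (simp add: algebra_simps)
    qed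
    have kdec: "k v2 - k v1 \<le> - (3 / 4 * b) * (v2 - v1)"
      if v12: "\<bar>v1 - v0\<bar> \<le> s" "\<bar>v2 - v0\<bar> \<le> s" and le: "v1 \<le> v2" for v1 v2
    proof -
      obtain C E where CE: "\<bar>C\<bar> \<le> M" "E \<le> -b" "k v2 - k v1 = (\<tau> v2 - \<tau> v1) * C + (v2 - v1) * E"
        using kst[OF v12] by blast
      have "(\<tau> v2 - \<tau> v1) * C \<le> \<bar>\<tau> v2 - \<tau> v1\<bar> * \<bar>C\<bar>"
        using abs_ge_self[of "(\<tau> v2 - \<tau> v1) * C"] by (simp add: abs_mult)
      also have "\<dots> \<le> \<bar>\<tau> v2 - \<tau> v1\<bar> * M" using CE(1) by (simp add: mult_left_mono)
      finally have "(\<tau> v2 - \<tau> v1) * C \<le> \<bar>\<tau> v2 - \<tau> v1\<bar> * M" .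
      from am[OF this] have "a * ((\<tau> v2 - \<tau> v1) * C) \<le> (a * \<bar>\<tau> v2 - \<tau> v1\<bar>) * M"
        by (simp add: algebra_simps)
      also have "\<dots> \<le> (\<epsilon> * \<bar>v2 - v1\<bar>) * M" using lt[OF v12] M0 by (rule mult_right_mono)
      also have "\<dots> = (\<epsilon> * M) * (v2 - v1)" using le by (simp add: algebra_simps)
      also have "\<dots> \<le> (a * b / 4) * (v2 - v1)" using ab le by (intro mult_right_mono) auto
      finally have 1: "a * ((\<tau> v2 - \<tau> v1) * C) \<le> a * b / 4 * (v2 - v1)" .
      have "(v2 - v1) * E \<le> (v2 - v1) * (-b)" using CE(2) le by (intro mult_left_mono) auto
      from am[OF this] have 2: "a * ((v2 - v1) * E) \<le> a * ((v2 - v1) * (-b))" .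
      have "a * (k v2 - k v1) \<le> a * (- (3 / 4 * b) * (v2 - v1))"
      proof -
        have eqk: "a * (k v2 - k v1) = a * ((\<tau> v2 - \<tau> v1) * C) + a * ((v2 - v1) * E)"
          by (simp add: CE(3) distrib_left)
        have r: "a * b / 4 * (v2 - v1) + a * ((v2 - v1) * (-b)) = a * (- (3 / 4 * b) * (v2 - v1))"
          by (simp add: field_simps)
        show ?thesis using eqk r 1 2 by linarith
      qed
      thus ?thesis using mult_le_cancel_left_pos[OF ab(1)] by blast
    qed
    have kv0: "\<bar>k v0\<bar> < b * s / 4"
    proof -
      have v00: "\<bar>v0 - v0\<bar> \<le> s" using s by simp
      note t0' = \<tau>[OF v00]
      obtain \<zeta> where \<zeta>: "\<bar>\<zeta> - t0\<bar> \<le> \<rho>" "F1 (\<tau> v0) v0 - F1 t0 v0 = (\<tau> v0 - t0) * P1t \<zeta> v0"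
        using mvt_in[of t0 t0 \<rho> "\<tau> v0" "\<lambda>\<theta>. F1 \<theta> v0" "\<lambda>\<theta>. P1t \<theta> v0"] t0' sr s dF1t by auto
      have "(\<tau> v0 - t0) * P1t \<zeta> v0 = Z * D0" using \<zeta>(2) t0' F10 by simp
      hence "\<bar>(\<tau> v0 - t0) * P1t \<zeta> v0\<bar> = \<bar>Z * D0\<bar>" by simp
      hence "\<bar>\<tau> v0 - t0\<bar> * \<bar>P1t \<zeta> v0\<bar> = \<bar>Z\<bar> * D0" using D0 by (simp only: abs_mult)
      moreover have "\<bar>\<tau> v0 - t0\<bar> * a \<le> \<bar>\<tau> v0 - t0\<bar> * \<bar>P1t \<zeta> v0\<bar>"
        using Bz[of \<zeta> v0] \<zeta>(1) s by (intro mult_left_mono) auto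
      ultimately have T: "a * \<bar>\<tau> v0 - t0\<bar> \<le> \<bar>Z\<bar> * D0" by (simp add: mult.commute)
      obtain \<zeta>' where \<zeta>': "\<bar>\<zeta>' - t0\<bar> \<le> \<rho>" "F2 (\<tau> v0) v0 - F2 t0 v0 = (\<tau> v0 - t0) * P2t \<zeta>' v0"
        using mvt_in[of t0 t0 \<rho> "\<tau> v0" "\<lambda>\<theta>. F2 \<theta> v0" "\<lambda>\<theta>. P2t \<theta> v0"] t0' sr s dF2t by auto
      have F20: "F2 t0 v0 = Z * D0" by (simp add: F2_def base D0_def)
      have "k v0 = (\<tau> v0 - t0) * P2t \<zeta>' v0 + Z * D0" using \<zeta>'(2) F20 unfolding k_def by linarith
      hence "\<bar>k v0\<bar> \<le> \<bar>(\<tau> v0 - t0) * P2t \<zeta>' v0\<bar> + \<bar>Z * D0\<bar>" by (simp add: abs_triangle_ineq)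
      hence "\<bar>k v0\<bar> \<le> \<bar>\<tau> v0 - t0\<bar> * \<bar>P2t \<zeta>' v0\<bar> + \<bar>Z\<bar> * D0" using D0 by (simp add: abs_mult)
      from am[OF this] have "a * \<bar>k v0\<bar> \<le> a * \<bar>\<tau> v0 - t0\<bar> * \<bar>P2t \<zeta>' v0\<bar> + a * (\<bar>Z\<bar> * D0)"
        by (simp add: algebra_simps)
      moreover have "a * \<bar>\<tau> v0 - t0\<bar> * \<bar>P2t \<zeta>' v0\<bar> \<le> (\<bar>Z\<bar> * D0) * M"
        by (rule mult_mono[OF T]) (use Bz[of \<zeta>' v0] \<zeta>'(1) s D0 in auto)
      ultimately have "a * \<bar>k v0\<bar> \<le> \<bar>Z\<bar> * D0 * (a + M)" by (simp add: algebra_simps)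
      hence "a * \<bar>k v0\<bar> < a * (b * s / 4)" using ZD2 by (simp add: algebra_simps)
      thus ?thesis using mult_less_cancel_left_pos[OF ab(1)] by blast
    qed
    have vs: "\<bar>v0 - s - v0\<bar> \<le> s" "\<bar>v0 - v0\<bar> \<le> s" "\<bar>v0 + s - v0\<bar> \<le> s" using s by auto
    have kr: "k (v0 + s) \<le> 0" using kdec[OF vs(2) vs(3)] kv0 s ab by simp
    have kl: "0 \<le> k (v0 - s)" using kdec[OF vs(1) vs(2)] kv0 s ab by simp
    have cont: "continuous_on {v0 - s..v0 + s} k"
    proof (rule lipschitz_on_continuous_on)
      show "((M * \<epsilon> + a * N) / a)-lipschitz_on {v0 - s..v0 + s} k"
        unfolding lipschitz_on_def
      proof (intro conjI ballI)
        show "0 \<le> (M * \<epsilon> + a * N) / a" using M0 eps0 N0 ab by simp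
        fix x y assume "x \<in> {v0 - s..v0 + s}" "y \<in> {v0 - s..v0 + s}"
        hence "\<bar>y - v0\<bar> \<le> s" "\<bar>x - v0\<bar> \<le> s" by auto
        from klip[OF this] have "\<bar>k x - k y\<bar> * a \<le> (M * \<epsilon> + a * N) * \<bar>x - y\<bar>"
          by (simp add: mult.commute abs_minus_commute)
        hence "\<bar>k x - k y\<bar> \<le> (M * \<epsilon> + a * N) * \<bar>x - y\<bar> / a" using ab by (simp add: pos_le_divide_eq)
        thus "dist (k x) (k y) \<le> (M * \<epsilon> + a * N) / a * dist x y" by (simp add: dist_real_def)
      qed
    qed
    obtain v where v: "v0 - s \<le> v" "v \<le> v0 + s" "k v = 0"
      using IVT2'[of k "v0 + s" 0 "v0 - s", OF kr kl _ cont] s by auto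
    hence vv: "\<bar>v - v0\<bar> \<le> s" by auto
    show "\<exists>\<theta> v. \<bar>\<theta> - t0\<bar> \<le> s \<and> \<bar>v - v0\<bar> \<le> s \<and> P1 \<theta> v - Z * (v - L) = 0 \<and> P2 \<theta> v + Z * (v - L) = 0"
      using \<tau>[OF vv] v(3) vv unfolding k_def F1_def F2_def by blast
  qed
qed

theorem theorem3p2:
  fixes \<alpha> \<rho>l \<theta>b vg :: real and \<psi>l \<psi>g :: "real \<Rightarrow> real \<Rightarrow> real"
  assumes "\<alpha> > 0"
    and "C2_on \<psi>l (phase_dom \<alpha>)" and "C2_on \<psi>g (phase_dom \<alpha>)"
    and "\<rho>l > 0" and "\<theta>b > 0"
    and "\<alpha> < 1 / \<rho>l" and "1 / \<rho>l < vg"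
    and "pres \<psi>l (1 / \<rho>l) \<theta>b = pres \<psi>g vg \<theta>b"
    and "pres \<psi>g vg \<theta>b = (\<psi>l (1 / \<rho>l) \<theta>b - \<psi>g vg \<theta>b) / (vg - 1 / \<rho>l)"
    and "dv (entr \<psi>l) (1 / \<rho>l) \<theta>b > (entr \<psi>g vg \<theta>b - entr \<psi>l (1 / \<rho>l) \<theta>b) / (vg - 1 / \<rho>l)"
    and "dv (pres \<psi>g) vg \<theta>b < 0"
  shows "\<exists>\<delta>>0. \<exists>r>0. \<exists>V \<Theta> :: real \<Rightarrow> real.
     (\<forall>Z \<in> {-\<delta><..<\<delta>}.
        (V Z, \<Theta> Z) \<in> ball (vg, \<theta>b) r \<and> \<alpha> < V Z \<and> 0 < \<Theta> Z \<and> V Z \<noteq> 1 / \<rho>l \<and>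
        f1 \<psi>l \<psi>g (1 / \<rho>l) (\<Theta> Z) (V Z) Z = 0 \<and> f2 \<psi>l \<psi>g (1 / \<rho>l) (\<Theta> Z) (V Z) Z = 0 \<and>
        (\<forall>v \<theta>. (v, \<theta>) \<in> ball (vg, \<theta>b) r \<and> \<alpha> < v \<and> 0 < \<theta> \<and> v \<noteq> 1 / \<rho>l \<and>
               f1 \<psi>l \<psi>g (1 / \<rho>l) \<theta> v Z = 0 \<and> f2 \<psi>l \<psi>g (1 / \<rho>l) \<theta> v Z = 0
               \<longrightarrow> v = V Z \<and> \<theta> = \<Theta> Z)) \<and>
     strict_mono_on {-\<delta><..<\<delta>} \<Theta>"
proof -
  define L where "L = 1 / \<rho>l"
  define S where "S = phase_dom \<alpha>"
  have hL: "\<alpha> < L" "L < vg" using assms(6,7) by (auto simp: L_def)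
  have Sopen: "open S" by (simp add: S_def phase_dom_def open_Times)
  have inS: "(v, \<theta>) \<in> S \<longleftrightarrow> \<alpha> < v \<and> 0 < \<theta>" for v \<theta> by (simp add: S_def phase_dom_def)
  have Cl: "C1_on \<psi>l S" "C1_on (dv \<psi>l) S" "C1_on (dth \<psi>l) S"
    using assms(2) by (auto simp: C2_on_def S_def)
  have Cg: "C1_on \<psi>g S" "C1_on (dv \<psi>g) S" "C1_on (dth \<psi>g) S"
    using assms(3) by (auto simp: C2_on_def S_def)
  have p0S: "(vg, \<theta>b) \<in> S" "(L, \<theta>b) \<in> S" using hL assms(1,5) inS by auto
  have schw: "dth (dv \<psi>l) L \<theta>b = dv (dth \<psi>l) L \<theta>b"
  proof (rule schwarz[OF Sopen p0S(2)])
    fix x y assume "(x, y) \<in> S"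
    thus "(\<lambda>x. \<psi>l x y) differentiable (at x) \<and> (\<lambda>y. \<psi>l x y) differentiable (at y) \<and>
        (\<lambda>x. dth \<psi>l x y) differentiable (at x) \<and> (\<lambda>y. dv \<psi>l x y) differentiable (at y)"
      using C1D(3,4)[OF Cl(1)] C1D(3)[OF Cl(3)] C1D(4)[OF Cl(2)] by blast
  next
    show "isCont (case_prod (dv (dth \<psi>l))) (L, \<theta>b)"
      using C1C(2)[OF Cl(3)] Sopen p0S(2) continuous_on_eq_continuous_at by blast
    show "isCont (case_prod (dth (dv \<psi>l))) (L, \<theta>b)"
      using C1C(3)[OF Cl(2)] Sopen p0S(2) continuous_on_eq_continuous_at by blast
  qed
  have dve: "dv (entr \<psi>l) L \<theta>b = - dv (dth \<psi>l) L \<theta>b"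
    unfolding dv_def[of "entr \<psi>l"] entr_def
    by (rule DERIV_imp_deriv, rule DERIV_minus, rule C1D(1)[OF Cl(3) p0S(2)])
  have dvp: "dv (pres \<psi>g) vg \<theta>b = - dv (dv \<psi>g) vg \<theta>b"
    unfolding dv_def[of "pres \<psi>g"] pres_def
    by (rule DERIV_imp_deriv, rule DERIV_minus, rule C1D(1)[OF Cg(2) p0S(1)])
  define Q where "Q \<theta> v = (\<psi>l L \<theta> - \<psi>g v \<theta>) / (v - L)" for \<theta> v
  define P1 where "P1 \<theta> v = pres \<psi>l L \<theta> - Q \<theta> v" for \<theta> v
  define P2 where "P2 \<theta> v = pres \<psi>g v \<theta> - Q \<theta> v" for \<theta> v
  define P1t where "P1t \<theta> v = - dth (dv \<psi>l) L \<theta> + (entr \<psi>l L \<theta> - entr \<psi>g v \<theta>) / (v - L)" for \<theta> v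
  define P1v where "P1v \<theta> v = (Q \<theta> v - pres \<psi>g v \<theta>) / (v - L)" for \<theta> v
  define P2t where "P2t \<theta> v = - dth (dv \<psi>g) v \<theta> + (entr \<psi>l L \<theta> - entr \<psi>g v \<theta>) / (v - L)" for \<theta> v
  define P2v where "P2v \<theta> v = - dv (dv \<psi>g) v \<theta> + (Q \<theta> v - pres \<psi>g v \<theta>) / (v - L)" for \<theta> v
  have f1P: "f1 \<psi>l \<psi>g L \<theta> v Z = P1 \<theta> v - Z * (v - L)" for \<theta> v Z
    by (simp add: f1_def P1_def Q_def)
  have f2P: "f2 \<psi>l \<psi>g L \<theta> v Z = P2 \<theta> v + Z * (v - L)" for \<theta> v Z
    by (simp add: f2_def P2_def Q_def)
  have Dall: "((\<lambda>\<theta>. P1 \<theta> v) has_real_derivative P1t \<theta> v) (at \<theta>) \<and> ((\<lambda>v. P1 \<theta> v) has_real_derivative P1v \<theta> v) (at v) \<and>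
      ((\<lambda>\<theta>. P2 \<theta> v) has_real_derivative P2t \<theta> v) (at \<theta>) \<and> ((\<lambda>v. P2 \<theta> v) has_real_derivative P2v \<theta> v) (at v)"
    if vt: "(v, \<theta>) \<in> S" "L < v" for v \<theta>
  proof -
    have Lt: "(L, \<theta>) \<in> S" using vt hL inS by auto
    have nz: "v - L \<noteq> 0" using vt by simp
    have dQt: "((\<lambda>\<theta>. Q \<theta> v) has_real_derivative (dth \<psi>l L \<theta> - dth \<psi>g v \<theta>) / (v - L)) (at \<theta>)"
      unfolding Q_def by (rule DERIV_cdivide, rule DERIV_diff, rule C1D(2)[OF Cl(1) Lt], rule C1D(2)[OF Cg(1) vt(1)])
    have dQv: "((\<lambda>v. Q \<theta> v) has_real_derivative (Q \<theta> v - pres \<psi>g v \<theta>) / (v - L) * (-1)) (at v)"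
    proof -
      have "((\<lambda>v. (\<psi>l L \<theta> - \<psi>g v \<theta>) / (v - L)) has_real_derivative
          ((0 - dv \<psi>g v \<theta>) * (v - L) - (\<psi>l L \<theta> - \<psi>g v \<theta>) * (1 - 0)) / ((v - L) * (v - L))) (at v)"
        by (rule DERIV_divide, rule DERIV_diff, rule DERIV_const, rule C1D(1)[OF Cg(1) vt(1)],
            rule DERIV_diff, rule DERIV_ident, rule DERIV_const, rule nz)
      thus ?thesis unfolding Q_def pres_def
        by (rule deriv_eqD) (use nz in \<open>simp add: field_simps\<close>)
    qed
    have "((\<lambda>\<theta>. P1 \<theta> v) has_real_derivative P1t \<theta> v) (at \<theta>)"
      unfolding P1_def pres_def
      by (rule deriv_eqD, rule DERIV_diff, rule DERIV_minus, rule C1D(2)[OF Cl(2) Lt], rule dQt)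
         (simp add: P1t_def entr_def diff_divide_distrib)
    moreover have "((\<lambda>v. P1 \<theta> v) has_real_derivative P1v \<theta> v) (at v)"
      unfolding P1_def
      by (rule deriv_eqD, rule DERIV_diff, rule DERIV_const, rule dQv) (simp add: P1v_def)
    moreover have "((\<lambda>\<theta>. P2 \<theta> v) has_real_derivative P2t \<theta> v) (at \<theta>)"
      unfolding P2_def pres_def
      by (rule deriv_eqD, rule DERIV_diff, rule DERIV_minus, rule C1D(2)[OF Cg(2) vt(1)], rule dQt)
         (simp add: P2t_def entr_def diff_divide_distrib)
    moreover have "((\<lambda>v. P2 \<theta> v) has_real_derivative P2v \<theta> v) (at v)"
      unfolding P2_def
      by (rule deriv_eqD, rule DERIV_diff, unfold pres_def, rule DERIV_minus, rule C1D(1)[OF Cg(2) vt(1)], rule dQv)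
         (simp add: P2v_def pres_def)
    ultimately show ?thesis by blast
  qed
  define p0 where "p0 = (vg, \<theta>b)"
  have LS: "(L, snd p0) \<in> S" using p0S by (simp add: p0_def)
  have p0S': "p0 \<in> S" using p0S by (simp add: p0_def)
  have c1: "isCont (\<lambda>p. dth (dv \<psi>l) L (snd p)) p0" by (rule ic_L[OF C1C(3)[OF Cl(2)] Sopen LS])
  have c2: "isCont (\<lambda>p. dth \<psi>l L (snd p)) p0" by (rule ic_L[OF C1C(3)[OF Cl(1)] Sopen LS])
  have c3: "isCont (\<lambda>p. \<psi>l L (snd p)) p0" by (rule ic_L[OF C1C(1)[OF Cl(1)] Sopen LS])
  have c4: "isCont (\<lambda>p. dth \<psi>g (fst p) (snd p)) p0" by (rule ic_full[OF C1C(3)[OF Cg(1)] Sopen p0S'])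
  have c5: "isCont (\<lambda>p. \<psi>g (fst p) (snd p)) p0" by (rule ic_full[OF C1C(1)[OF Cg(1)] Sopen p0S'])
  have c6: "isCont (\<lambda>p. dv \<psi>g (fst p) (snd p)) p0" by (rule ic_full[OF C1C(2)[OF Cg(1)] Sopen p0S'])
  have c7: "isCont (\<lambda>p. dv (dv \<psi>g) (fst p) (snd p)) p0" by (rule ic_full[OF C1C(2)[OF Cg(2)] Sopen p0S'])
  have c8: "isCont (\<lambda>p. dth (dv \<psi>g) (fst p) (snd p)) p0" by (rule ic_full[OF C1C(3)[OF Cg(2)] Sopen p0S'])
  have nz0: "fst p0 - L \<noteq> 0" using hL by (simp add: p0_def)
  have cQ: "isCont (\<lambda>p. Q (snd p) (fst p)) p0"
    unfolding Q_def using nz0 by (intro continuous_intros c3 c5) auto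
  have cP1t: "isCont (\<lambda>p. P1t (snd p) (fst p)) p0"
    unfolding P1t_def entr_def using nz0 by (intro continuous_intros c1 c2 c4) auto
  have cP1v: "isCont (\<lambda>p. P1v (snd p) (fst p)) p0"
    unfolding P1v_def pres_def using nz0 by (intro continuous_intros cQ c6) auto
  have cP2t: "isCont (\<lambda>p. P2t (snd p) (fst p)) p0"
    unfolding P2t_def entr_def using nz0 by (intro continuous_intros c8 c2 c4) auto
  have cP2v: "isCont (\<lambda>p. P2v (snd p) (fst p)) p0"
    unfolding P2v_def pres_def using nz0 by (intro continuous_intros cQ c6 c7) auto
  define a0 where "a0 = P1t \<theta>b vg"
  have "a0 = dv (entr \<psi>l) L \<theta>b - (entr \<psi>g vg \<theta>b - entr \<psi>l L \<theta>b) / (vg - L)"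
    unfolding a0_def P1t_def using schw dve by (simp add: diff_divide_distrib)
  hence a0: "a0 > 0" using assms(10) unfolding L_def by simp
  define b0 where "b0 = - dv (pres \<psi>g) vg \<theta>b"
  have b0: "b0 > 0" using assms(11) by (simp add: b0_def)
  have Qb: "Q \<theta>b vg = pres \<psi>g vg \<theta>b" using assms(9) by (simp add: Q_def L_def)
  have P1b: "P1 \<theta>b vg = 0" using assms(8) Qb by (simp add: P1_def L_def)
  have P2b: "P2 \<theta>b vg = 0" using Qb by (simp add: P2_def)
  have P1vb: "P1v \<theta>b vg = 0" using Qb by (simp add: P1v_def)
  have P2vb: "P2v \<theta>b vg = - b0" using Qb dvp by (simp add: P2v_def b0_def)
  define M where "M = \<bar>P2t \<theta>b vg\<bar> + 1"
  have M: "M > 0" by (simp add: M_def add_nonneg_pos)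
  define \<epsilon> where "\<epsilon> = min (min (b0 / 4) (a0 / 4)) (a0 * b0 / (16 * M))"
  have \<epsilon>: "\<epsilon> > 0" using a0 b0 M by (simp add: \<epsilon>_def)
  have \<epsilon>M: "\<epsilon> * M \<le> a0 / 2 * (b0 / 2) / 4"
  proof -
    have "\<epsilon> \<le> a0 * b0 / (16 * M)" by (simp add: \<epsilon>_def)
    hence "\<epsilon> * M \<le> a0 * b0 / (16 * M) * M" by (rule mult_right_mono) (use M in auto)
    also have "\<dots> = a0 / 2 * (b0 / 2) / 4" using M by (simp add: field_simps)
    finally show ?thesis .
  qed
  define \<delta>0 where "\<delta>0 = min (\<epsilon> / 2) (b0 / 4)"
  have \<delta>0: "\<delta>0 > 0" using \<epsilon> b0 by (simp add: \<delta>0_def)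
  define Cnd where "Cnd p \<longleftrightarrow> p \<in> S \<and> L < fst p \<and> \<bar>P1t (snd p) (fst p) - a0\<bar> < a0 / 2 \<and>
      \<bar>P1v (snd p) (fst p)\<bar> < \<epsilon> / 2 \<and> \<bar>P2v (snd p) (fst p) + b0\<bar> < b0 / 4 \<and>
      \<bar>P2t (snd p) (fst p) - P2t \<theta>b vg\<bar> < 1" for p
  have ev: "eventually Cnd (nhds p0)"
  proof -
    have e1: "eventually (\<lambda>p. p \<in> S) (nhds p0)" by (rule eventually_nhds_in_open[OF Sopen p0S'])
    have "eventually (\<lambda>p. \<bar>fst p - fst p0\<bar> < vg - L) (nhds p0)"
      by (rule ev_cont) (use hL in \<open>auto intro: continuous_intros\<close>)
    hence e2: "eventually (\<lambda>p. L < fst p) (nhds p0)" by (rule eventually_mono) (auto simp: p0_def)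
    have e3: "eventually (\<lambda>p. \<bar>P1t (snd p) (fst p) - a0\<bar> < a0 / 2) (nhds p0)"
      using ev_cont[OF cP1t, of "a0 / 2"] a0 by (simp add: p0_def a0_def)
    have e4: "eventually (\<lambda>p. \<bar>P1v (snd p) (fst p)\<bar> < \<epsilon> / 2) (nhds p0)"
      using ev_cont[OF cP1v, of "\<epsilon> / 2"] \<epsilon> P1vb by (simp add: p0_def)
    have e5: "eventually (\<lambda>p. \<bar>P2v (snd p) (fst p) + b0\<bar> < b0 / 4) (nhds p0)"
      using ev_cont[OF cP2v, of "b0 / 4"] b0 P2vb by (simp add: p0_def)
    have e6: "eventually (\<lambda>p. \<bar>P2t (snd p) (fst p) - P2t \<theta>b vg\<bar> < 1) (nhds p0)"
      using ev_cont[OF cP2t, of 1] by (simp add: p0_def)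
    show ?thesis unfolding Cnd_def by (intro eventually_conj e1 e2 e3 e4 e5 e6)
  qed
  then obtain d where d: "d > 0" "\<And>p. dist p p0 < d \<Longrightarrow> Cnd p"
    unfolding eventually_nhds_metric by blast
  define \<rho> where "\<rho> = d / 3"
  have \<rho>: "\<rho> > 0" using d by (simp add: \<rho>_def)
  have distle: "dist (v, \<theta>) (vg, \<theta>b) \<le> \<bar>v - vg\<bar> + \<bar>\<theta> - \<theta>b\<bar>" for v \<theta>
    unfolding dist_Pair_Pair dist_real_def using sqrt_sum_squares_le_sum_abs[of "v - vg" "\<theta> - \<theta>b"] by simp
  have boxC: "Cnd (v, \<theta>)" if "\<bar>\<theta> - \<theta>b\<bar> \<le> \<rho>" "\<bar>v - vg\<bar> \<le> \<rho>" for \<theta> v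
  proof -
    have "dist (v, \<theta>) p0 < d" using distle[of v \<theta>] that d by (simp add: p0_def \<rho>_def)
    thus ?thesis using d by blast
  qed
  have hD: "\<And>\<theta> v. \<bar>\<theta> - \<theta>b\<bar> \<le> \<rho> \<Longrightarrow> \<bar>v - vg\<bar> \<le> \<rho> \<Longrightarrow>
      ((\<lambda>\<theta>. P1 \<theta> v) has_real_derivative P1t \<theta> v) (at \<theta>) \<and> ((\<lambda>v. P1 \<theta> v) has_real_derivative P1v \<theta> v) (at v) \<and>
      ((\<lambda>\<theta>. P2 \<theta> v) has_real_derivative P2t \<theta> v) (at \<theta>) \<and> ((\<lambda>v. P2 \<theta> v) has_real_derivative P2v \<theta> v) (at v)"
    using boxC Dall unfolding Cnd_def by auto
  have hB: "\<And>\<theta> v Z. \<bar>\<theta> - \<theta>b\<bar> \<le> \<rho> \<Longrightarrow> \<bar>v - vg\<bar> \<le> \<rho> \<Longrightarrow> \<bar>Z\<bar> < \<delta>0 \<Longrightarrow>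
      a0 / 2 \<le> P1t \<theta> v \<and> \<bar>P1v \<theta> v - Z\<bar> \<le> \<epsilon> \<and> P2v \<theta> v + Z \<le> - (b0 / 2) \<and> \<bar>P2v \<theta> v + Z\<bar> \<le> 3 * b0 / 2 \<and> \<bar>P2t \<theta> v\<bar> \<le> M"
  proof -
    fix \<theta> v Z assume h: "\<bar>\<theta> - \<theta>b\<bar> \<le> \<rho>" "\<bar>v - vg\<bar> \<le> \<rho>" "\<bar>Z\<bar> < \<delta>0"
    have C: "Cnd (v, \<theta>)" using boxC h by blast
    have Z: "\<bar>Z\<bar> < \<epsilon> / 2" "\<bar>Z\<bar> < b0 / 4" using h(3) by (auto simp: \<delta>0_def)
    show "a0 / 2 \<le> P1t \<theta> v \<and> \<bar>P1v \<theta> v - Z\<bar> \<le> \<epsilon> \<and> P2v \<theta> v + Z \<le> - (b0 / 2) \<and> \<bar>P2v \<theta> v + Z\<bar> \<le> 3 * b0 / 2 \<and> \<bar>P2t \<theta> v\<bar> \<le> M"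
    proof -
      have C': "\<bar>P1t \<theta> v - a0\<bar> < a0 / 2" "\<bar>P1v \<theta> v\<bar> < \<epsilon> / 2" "\<bar>P2v \<theta> v + b0\<bar> < b0 / 4"
        "\<bar>P2t \<theta> v - P2t \<theta>b vg\<bar> < 1" using C unfolding Cnd_def by auto
      have 1: "a0 / 2 \<le> P1t \<theta> v" using C'(1) abs_ge_minus_self[of "P1t \<theta> v - a0"] by linarith
      have 2: "\<bar>P1v \<theta> v - Z\<bar> \<le> \<epsilon>" using C'(2) Z(1) abs_triangle_ineq4[of "P1v \<theta> v" Z] by linarith
      have 3: "P2v \<theta> v + Z \<le> - (b0 / 2)" using C'(3) Z(2) abs_ge_self[of "P2v \<theta> v + b0"] abs_ge_self[of Z] by linarith
      have 4: "\<bar>P2v \<theta> v + Z\<bar> \<le> 3 * b0 / 2"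
        using C'(3) Z(2) abs_triangle_ineq[of "P2v \<theta> v + b0" "Z - b0"] abs_triangle_ineq4[of Z b0] b0 by simp
      have 5: "\<bar>P2t \<theta> v\<bar> \<le> M" unfolding M_def using C'(4) abs_triangle_ineq2[of "P2t \<theta> v" "P2t \<theta>b vg"] by linarith
      show ?thesis using 1 2 3 4 5 by blast
    qed
  qed
  have Lr: "L < vg - \<rho>" using boxC[of \<theta>b "vg - \<rho>"] \<rho> unfolding Cnd_def by simp
  have ab1: "a0 / 2 > 0" "b0 / 2 > 0" "\<epsilon> \<le> b0 / 2 / 2" "\<epsilon> \<le> a0 / 2 / 2"
    using a0 b0 by (auto simp: \<epsilon>_def)
  obtain \<delta>1 where \<delta>1: "\<delta>1 > 0" "\<And>Z. \<bar>Z\<bar> < \<delta>1 \<Longrightarrow> \<exists>\<theta> v. \<bar>\<theta> - \<theta>b\<bar> \<le> \<rho> / 3 \<and> \<bar>v - vg\<bar> \<le> \<rho> / 3 \<and>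
            P1 \<theta> v - Z * (v - L) = 0 \<and> P2 \<theta> v + Z * (v - L) = 0"
    using core_exist[OF hD hB ab1(1,2,3) \<epsilon>M ab1(4) Lr \<delta>0 P1b P2b, of "\<rho> / 3"] \<rho> by auto
  define \<delta> where "\<delta> = min \<delta>1 \<delta>0"
  have \<delta>: "\<delta> > 0" using \<delta>1 \<delta>0 by (simp add: \<delta>_def)
  define R where "R Z w \<longleftrightarrow> \<bar>snd w - \<theta>b\<bar> \<le> \<rho> / 3 \<and> \<bar>fst w - vg\<bar> \<le> \<rho> / 3 \<and>
            P1 (snd w) (fst w) - Z * (fst w - L) = 0 \<and> P2 (snd w) (fst w) + Z * (fst w - L) = 0" for Z w
  have "\<forall>Z\<in>{-\<delta><..<\<delta>}. \<exists>w. R Z w"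
  proof
    fix Z assume "Z \<in> {-\<delta><..<\<delta>}"
    hence "\<bar>Z\<bar> < \<delta>1" by (auto simp: \<delta>_def)
    then obtain \<theta> v where "\<bar>\<theta> - \<theta>b\<bar> \<le> \<rho> / 3 \<and> \<bar>v - vg\<bar> \<le> \<rho> / 3 \<and> P1 \<theta> v - Z * (v - L) = 0 \<and> P2 \<theta> v + Z * (v - L) = 0"
      using \<delta>1(2) by blast
    thus "\<exists>w. R Z w" unfolding R_def by (intro exI[of _ "(v, \<theta>)"]) simp
  qed
  then obtain W where W: "\<And>Z. Z \<in> {-\<delta><..<\<delta>} \<Longrightarrow> R Z (W Z)" using bchoice by metis
  define V where "V Z = fst (W Z)" for Z
  define \<Theta> where "\<Theta> Z = snd (W Z)" for Z
  have W': "\<bar>\<Theta> Z - \<theta>b\<bar> \<le> \<rho> / 3 \<and> \<bar>V Z - vg\<bar> \<le> \<rho> / 3 \<and> P1 (\<Theta> Z) (V Z) - Z * (V Z - L) = 0 \<and> P2 (\<Theta> Z) (V Z) + Z * (V Z - L) = 0"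
    if "Z \<in> {-\<delta><..<\<delta>}" for Z using W[OF that] unfolding R_def V_def \<Theta>_def .
  have Zd0: "\<bar>Z\<bar> < \<delta>0" if "Z \<in> {-\<delta><..<\<delta>}" for Z using that by (auto simp: \<delta>_def)
  have abU: "a0 / 2 > 0" "b0 / 2 > 0" "\<epsilon> \<le> b0 / 2 / 2" "\<epsilon> * M \<le> a0 / 2 * (b0 / 2) / 4" "L < vg - \<rho>"
    using ab1 \<epsilon>M Lr by auto
  have uniq: "(Z1 < Z2 \<longrightarrow> \<theta>1 < \<theta>2) \<and> (Z1 = Z2 \<longrightarrow> \<theta>1 = \<theta>2 \<and> v1 = v2)"
    if "\<bar>\<theta>1 - \<theta>b\<bar> \<le> \<rho>" "\<bar>v1 - vg\<bar> \<le> \<rho>" "\<bar>\<theta>2 - \<theta>b\<bar> \<le> \<rho>" "\<bar>v2 - vg\<bar> \<le> \<rho>"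
      "\<bar>Z1\<bar> < \<delta>0" "\<bar>Z2\<bar> < \<delta>0" "Z1 \<le> Z2"
      "P1 \<theta>1 v1 - Z1 * (v1 - L) = 0" "P2 \<theta>1 v1 + Z1 * (v1 - L) = 0"
      "P1 \<theta>2 v2 - Z2 * (v2 - L) = 0" "P2 \<theta>2 v2 + Z2 * (v2 - L) = 0" for \<theta>1 v1 Z1 \<theta>2 v2 Z2
    by (rule core_uniq[OF hD hB abU that])
  have final: "\<exists>\<delta>>0. \<exists>r>0. \<exists>V \<Theta> :: real \<Rightarrow> real.
     (\<forall>Z \<in> {-\<delta><..<\<delta>}.
        (V Z, \<Theta> Z) \<in> ball (vg, \<theta>b) r \<and> \<alpha> < V Z \<and> 0 < \<Theta> Z \<and> V Z \<noteq> L \<and>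
        f1 \<psi>l \<psi>g L (\<Theta> Z) (V Z) Z = 0 \<and> f2 \<psi>l \<psi>g L (\<Theta> Z) (V Z) Z = 0 \<and>
        (\<forall>v \<theta>. (v, \<theta>) \<in> ball (vg, \<theta>b) r \<and> \<alpha> < v \<and> 0 < \<theta> \<and> v \<noteq> L \<and>
               f1 \<psi>l \<psi>g L \<theta> v Z = 0 \<and> f2 \<psi>l \<psi>g L \<theta> v Z = 0
               \<longrightarrow> v = V Z \<and> \<theta> = \<Theta> Z)) \<and>
     strict_mono_on {-\<delta><..<\<delta>} \<Theta>"
  proof (rule exI[of _ \<delta>], rule conjI[OF \<delta>], rule exI[of _ \<rho>], rule conjI[OF \<rho>],
      rule exI[of _ V], rule exI[of _ \<Theta>], intro conjI ballI)
    fix Z assume Z: "Z \<in> {-\<delta><..<\<delta>}"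
    note w = W'[OF Z]
    have C: "Cnd (V Z, \<Theta> Z)" using boxC w \<rho> by auto
    have "dist (V Z, \<Theta> Z) (vg, \<theta>b) < \<rho>" using distle[of "V Z" "\<Theta> Z"] w \<rho> by linarith
    thus "(V Z, \<Theta> Z) \<in> ball (vg, \<theta>b) \<rho>" by (simp add: dist_commute)
    show "\<alpha> < V Z" "0 < \<Theta> Z" "V Z \<noteq> L" using C inS unfolding Cnd_def by auto
    show "f1 \<psi>l \<psi>g L (\<Theta> Z) (V Z) Z = 0" "f2 \<psi>l \<psi>g L (\<Theta> Z) (V Z) Z = 0" using w f1P f2P by auto
    show "\<forall>v \<theta>. (v, \<theta>) \<in> ball (vg, \<theta>b) \<rho> \<and> \<alpha> < v \<and> 0 < \<theta> \<and> v \<noteq> L \<and>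
               f1 \<psi>l \<psi>g L \<theta> v Z = 0 \<and> f2 \<psi>l \<psi>g L \<theta> v Z = 0
               \<longrightarrow> v = V Z \<and> \<theta> = \<Theta> Z"
    proof (intro allI impI)
      fix v \<theta> assume h: "(v, \<theta>) \<in> ball (vg, \<theta>b) \<rho> \<and> \<alpha> < v \<and> 0 < \<theta> \<and> v \<noteq> L \<and>
               f1 \<psi>l \<psi>g L \<theta> v Z = 0 \<and> f2 \<psi>l \<psi>g L \<theta> v Z = 0"
      have dd: "dist vg v < \<rho>" "dist \<theta>b \<theta> < \<rho>"
        using h dist_fst_le[of "(vg, \<theta>b)" "(v, \<theta>)"] dist_snd_le[of "(vg, \<theta>b)" "(v, \<theta>)"]
        by auto
      have b1: "\<bar>\<theta> - \<theta>b\<bar> \<le> \<rho>" "\<bar>v - vg\<bar> \<le> \<rho>" using dd by (auto simp: dist_real_def)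
      have b2: "\<bar>\<Theta> Z - \<theta>b\<bar> \<le> \<rho>" "\<bar>V Z - vg\<bar> \<le> \<rho>" using w \<rho> by auto
      have e: "P1 \<theta> v - Z * (v - L) = 0" "P2 \<theta> v + Z * (v - L) = 0" using h f1P f2P by auto
      have "\<theta> = \<Theta> Z \<and> v = V Z"
        using uniq[OF b1 b2 Zd0[OF Z] Zd0[OF Z] order_refl e] w by blast
      thus "v = V Z \<and> \<theta> = \<Theta> Z" by simp
    qed
  next
    show "strict_mono_on {-\<delta><..<\<delta>} \<Theta>"
    proof (rule strict_mono_onI)
      fix x y assume xy: "x \<in> {-\<delta><..<\<delta>}" "y \<in> {-\<delta><..<\<delta>}" "x < y"
      note wx = W'[OF xy(1)] and wy = W'[OF xy(2)]
      have bx: "\<bar>\<Theta> x - \<theta>b\<bar> \<le> \<rho>" "\<bar>V x - vg\<bar> \<le> \<rho>" using wx \<rho> by auto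
      have by': "\<bar>\<Theta> y - \<theta>b\<bar> \<le> \<rho>" "\<bar>V y - vg\<bar> \<le> \<rho>" using wy \<rho> by auto
      show "\<Theta> x < \<Theta> y"
        using uniq[OF bx by' Zd0[OF xy(1)] Zd0[OF xy(2)] less_imp_le[OF xy(3)]] wx wy xy(3) by blast
    qed
  qed
  show ?thesis using final unfolding L_def .
qed

end
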